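(* Let $\mathcal D$ be a $2$-$(v,k,\lambda)$ design admitting a flag-transitive point-imprimitive automorphism group $G$ preserving a nontrivial partition $\Sigma$ of the point set into $v_1$ classes of size $v_0$, and let $k_0,k_1,\mathcal D_0$ be as in the context. Then $v_0>k_0\ge2$, and one of the following holds: (1) $k_0=2$, $v=(v_0-1)(2k_1-1)+1$, and $G_\Delta^\Delta$ is $2$-transitive on $\Delta$; (2) $3\le k_0\le v_0-2$ and $\mathcal D_0$ is a $2$-design; (3) $3\le k_0=v_0-1$, $\mathcal D_0$ is a $1$-design, and $k=t(v_0-2)+1$, $v=t(v_0-1)+1$ for some integer $t\ge2$.
   Context: By the Camina–Zieschang theorem, in this situation there is a constant $k_0\ge 2$ such that every block meets every class $\Delta\in\Sigma$ in either $0$ or $k_0$ points; $k_0$ divides $k$, $k_1=k/k_0$ is the number of classes met by any block, and $\frac{v-1}{k-1}=\frac{v_0-1}{k_0-1}$. For $\Delta\in\Sigma$, $\mathcal D_0=\mathcal D_\Delta$ is the incidence structure with point set $\Delta$ and blocks the nonempty sets $B\cap\Delta$ ($B$ a block of $\mathcal D$); it is either a symmetric $1$-design with $k_0=v_0-1$ or a $2$-$(v_0,k_0,\lambda_0)$ design, and $G_\Delta^\Delta$ (the permutation group induced on $\Delta$ by its setwise stabilizer $G_\Delta$) acts flag-transitively on it. *)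

theory Defs
  imports Main "HOL-Algebra.Bij"
begin

definition design2 :: "'a set \<Rightarrow> 'a set set \<Rightarrow> nat \<Rightarrow> nat \<Rightarrow> nat \<Rightarrow> bool" where
  "design2 P Bs v k lam \<longleftrightarrow> finite P \<and> card P = v \<and> (\<forall>B\<in>Bs. B \<subseteq> P \<and> card B = k) \<and> lam > 0 \<and>
     (\<forall>x\<in>P. \<forall>y\<in>P. x \<noteq> y \<longrightarrow> card {B\<in>Bs. x \<in> B \<and> y \<in> B} = lam)"

definition design1 :: "'a set \<Rightarrow> 'a set set \<Rightarrow> nat \<Rightarrow> nat \<Rightarrow> nat \<Rightarrow> bool" where
  "design1 P Bs v k r \<longleftrightarrow> finite P \<and> card P = v \<and> (\<forall>B\<in>Bs. B \<subseteq> P \<and> card B = k) \<and> r > 0 \<and>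
     (\<forall>x\<in>P. card {B\<in>Bs. x \<in> B} = r)"

definition aut_group :: "('a \<Rightarrow> 'a) set \<Rightarrow> 'a set \<Rightarrow> 'a set set \<Rightarrow> bool" where
  "aut_group G P Bs \<longleftrightarrow> subgroup G (BijGroup P) \<and> (\<forall>g\<in>G. \<forall>B\<in>Bs. g ` B \<in> Bs)"

definition flag_transitive :: "('a \<Rightarrow> 'a) set \<Rightarrow> 'a set set \<Rightarrow> bool" where
  "flag_transitive G Bs \<longleftrightarrow> (\<forall>B\<in>Bs. \<forall>C\<in>Bs. \<forall>x\<in>B. \<forall>y\<in>C. \<exists>g\<in>G. g x = y \<and> g ` B = C)"

definition G_invariant_partition :: "('a \<Rightarrow> 'a) set \<Rightarrow> 'a set \<Rightarrow> 'a set set \<Rightarrow> nat \<Rightarrow> nat \<Rightarrow> bool" where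
  "G_invariant_partition G P \<Sigma> v0 v1 \<longleftrightarrow>
     \<Union>\<Sigma> = P \<and> (\<forall>\<Delta>\<in>\<Sigma>. \<forall>\<Delta>'\<in>\<Sigma>. \<Delta> \<noteq> \<Delta>' \<longrightarrow> \<Delta> \<inter> \<Delta>' = {}) \<and>
     (\<forall>\<Delta>\<in>\<Sigma>. card \<Delta> = v0) \<and> card \<Sigma> = v1 \<and> v0 > 1 \<and> v1 > 1 \<and>
     (\<forall>g\<in>G. \<forall>\<Delta>\<in>\<Sigma>. g ` \<Delta> \<in> \<Sigma>)"

definition induced_blocks :: "'a set set \<Rightarrow> 'a set \<Rightarrow> 'a set set" where
  "induced_blocks Bs \<Delta> = {B \<inter> \<Delta> | B. B \<in> Bs \<and> B \<inter> \<Delta> \<noteq> {}}"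

definition induced_2transitive :: "('a \<Rightarrow> 'a) set \<Rightarrow> 'a set \<Rightarrow> bool" where
  "induced_2transitive G \<Delta> \<longleftrightarrow> (\<forall>x\<in>\<Delta>. \<forall>y\<in>\<Delta>. \<forall>x'\<in>\<Delta>. \<forall>y'\<in>\<Delta>. x \<noteq> y \<longrightarrow> x' \<noteq> y' \<longrightarrow>
     (\<exists>g\<in>G. g ` \<Delta> = \<Delta> \<and> g x = x' \<and> g y = y'))"

end

theory Submission
  imports Defs
begin
lemma dc: "finite A \<Longrightarrow> finite Y \<Longrightarrow> (\<Sum>B\<in>A. card {y\<in>Y. y\<in>B}) = (\<Sum>y\<in>Y. card {B\<in>A. y\<in>B})"
proof -
  assume fA: "finite A" and fY: "finite Y"
  have "(\<Sum>B\<in>A. card {y\<in>Y. y\<in>B}) = (\<Sum>B\<in>A. \<Sum>y\<in>{y. y\<in>Y \<and> y\<in>B}. (1::nat))" by simp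
  also have "\<dots> = (\<Sum>y\<in>Y. \<Sum>B\<in>{B. B\<in>A \<and> y\<in>B}. (1::nat))"
    by (rule sum.swap_restrict[OF fA fY])
  also have "\<dots> = (\<Sum>y\<in>Y. card {B\<in>A. y\<in>B})" by simp
  finally show ?thesis .
qed

lemma Gbij: "aut_group G P Bs \<Longrightarrow> g \<in> G \<Longrightarrow> inj_on g P \<and> g ` P = P"
proof -
  assume a: "aut_group G P Bs" "g \<in> G"
  then have "g \<in> carrier (BijGroup P)" unfolding aut_group_def using subgroup.subset by blast
  then show ?thesis by (simp add: BijGroup_def Bij_def bij_betw_def)
qed

theorem lemma3p3:
  fixes P :: "'a set" and Bs :: "'a set set" and G :: "('a \<Rightarrow> 'a) set"
    and \<Sigma> :: "'a set set" and v k lam v0 v1 k0 :: nat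
  assumes D: "design2 P Bs v k lam" and kv: "k < v"
    and aut: "aut_group G P Bs" and ft: "flag_transitive G Bs"
    and part: "G_invariant_partition G P \<Sigma> v0 v1"
    and k0: "\<forall>B\<in>Bs. \<forall>\<Delta>\<in>\<Sigma>. B \<inter> \<Delta> \<noteq> {} \<longrightarrow> card (B \<inter> \<Delta>) = k0"
  shows "v0 > k0 \<and> k0 \<ge> 2 \<and>
    ((k0 = 2 \<and> int v = (int v0 - 1) * (2 * int (k div k0) - 1) + 1 \<and>
        (\<forall>\<Delta>\<in>\<Sigma>. induced_2transitive G \<Delta>))
     \<or> (3 \<le> k0 \<and> k0 \<le> v0 - 2 \<and>
        (\<forall>\<Delta>\<in>\<Sigma>. \<exists>lam0. design2 \<Delta> (induced_blocks Bs \<Delta>) v0 k0 lam0))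
     \<or> (3 \<le> k0 \<and> k0 = v0 - 1 \<and>
        (\<forall>\<Delta>\<in>\<Sigma>. \<exists>r0. design1 \<Delta> (induced_blocks Bs \<Delta>) v0 k0 r0) \<and>
        (\<exists>t::nat. t \<ge> 2 \<and> k = t * (v0 - 2) + 1 \<and> v = t * (v0 - 1) + 1)))"
proof -
  from D have finP: "finite P" and cardP: "card P = v" and blk: "\<And>B. B\<in>Bs \<Longrightarrow> B \<subseteq> P \<and> card B = k"
    and lampos: "lam > 0"
    and pair: "\<And>x y. x\<in>P \<Longrightarrow> y\<in>P \<Longrightarrow> x\<noteq>y \<Longrightarrow> card {B\<in>Bs. x\<in>B \<and> y\<in>B} = lam"
    unfolding design2_def by auto
  from part have UP: "\<Union>\<Sigma> = P"
    and disj: "\<And>D D'. D\<in>\<Sigma> \<Longrightarrow> D'\<in>\<Sigma> \<Longrightarrow> D\<noteq>D' \<Longrightarrow> D\<inter>D' = {}"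
    and cardD: "\<And>D. D\<in>\<Sigma> \<Longrightarrow> card D = v0" and cS: "card \<Sigma> = v1" and v0g: "v0>1" and v1g: "v1>1"
    and Ginv: "\<And>g D. g\<in>G \<Longrightarrow> D\<in>\<Sigma> \<Longrightarrow> g`D \<in> \<Sigma>"
    unfolding G_invariant_partition_def by auto
  have finBs: "finite Bs"
  proof -
    have "Bs \<subseteq> Pow P" using blk by blast
    then show ?thesis using finP finite_subset by blast
  qed
  have finS: "finite \<Sigma>" using UP finP by (simp add: finite_UnionD)
  have DsubP: "\<And>D. D\<in>\<Sigma> \<Longrightarrow> D \<subseteq> P" using UP by blast
  have finD: "\<And>D. D\<in>\<Sigma> \<Longrightarrow> finite D" using DsubP finP finite_subset by blast
  have finB: "\<And>B. B\<in>Bs \<Longrightarrow> finite B" using blk finP finite_subset by blast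
  have Gi: "\<And>g. g\<in>G \<Longrightarrow> inj_on g P \<and> g`P = P" using Gbij aut by blast
  have Gb: "\<And>g B. g\<in>G \<Longrightarrow> B\<in>Bs \<Longrightarrow> g`B \<in> Bs" using aut unfolding aut_group_def by blast
  have uniq: "\<And>D D' x. D\<in>\<Sigma> \<Longrightarrow> D'\<in>\<Sigma> \<Longrightarrow> x\<in>D \<Longrightarrow> x\<in>D' \<Longrightarrow> D = D'" using disj by blast
  obtain D1 D2 where D1: "D1\<in>\<Sigma>" and D2: "D2\<in>\<Sigma>" and D12: "D1\<noteq>D2"
  proof -
    have "\<Sigma> \<noteq> {}" using cS v1g by auto
    then obtain D1 where "D1 \<in> \<Sigma>" by blast
    moreover have "card (\<Sigma> - {D1}) > 0" using cS v1g \<open>D1 \<in> \<Sigma>\<close> finS by simp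
    then have "\<Sigma> - {D1} \<noteq> {}" by (metis card.empty less_irrefl)
    then obtain D2 where "D2\<in>\<Sigma>" "D2 \<noteq> D1" by blast
    ultimately show ?thesis using that by blast
  qed
  have vbig: "2*v0 \<le> v"
  proof -
    have "card (D1 \<union> D2) = card D1 + card D2"
      using card_Un_disjoint[OF finD[OF D1] finD[OF D2]] disj[OF D1 D2 D12] by simp
    moreover have "card (D1 \<union> D2) \<le> card P" using DsubP[OF D1] DsubP[OF D2] finP by (simp add: card_mono)
    ultimately show ?thesis using cardD D1 D2 cardP by simp
  qed
  have exB: "\<And>x y. x\<in>P \<Longrightarrow> y\<in>P \<Longrightarrow> x\<noteq>y \<Longrightarrow> \<exists>B\<in>Bs. x\<in>B \<and> y\<in>B"
  proof -
    fix x y assume "x\<in>P" "y\<in>P" "x\<noteq>y"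
    then have "card {B\<in>Bs. x\<in>B \<and> y\<in>B} = lam" using pair by blast
    then have "{B\<in>Bs. x\<in>B \<and> y\<in>B} \<noteq> {}" using lampos by (metis card.empty less_irrefl)
    then show "\<exists>B\<in>Bs. x\<in>B \<and> y\<in>B" by blast
  qed
  have two: "\<And>D. D\<in>\<Sigma> \<Longrightarrow> \<exists>x y. x\<in>D \<and> y\<in>D \<and> x\<noteq>y"
  proof -
    fix D assume "D\<in>\<Sigma>"
    then have "card D > 1" using cardD v0g by simp
    then have "D \<noteq> {}" by auto
    then obtain x where x: "x\<in>D" by blast
    have "card (D - {x}) > 0" using \<open>card D > 1\<close> x by simp
    then have "D - {x} \<noteq> {}" by (metis card.empty less_irrefl)
    then show "\<exists>x y. x\<in>D \<and> y\<in>D \<and> x\<noteq>y" using x by blast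
  qed
  have blkx: "\<And>x. x\<in>P \<Longrightarrow> \<exists>B\<in>Bs. x\<in>B"
  proof -
    fix x assume x: "x\<in>P"
    then obtain D where D: "D\<in>\<Sigma>" "x\<in>D" using UP by blast
    obtain a b where "a\<in>D" "b\<in>D" "a\<noteq>b" using two[OF D(1)] by blast
    then obtain y where "y\<in>D" "y\<noteq>x" by metis
    then show "\<exists>B\<in>Bs. x\<in>B" using exB[of x y] x DsubP[OF D(1)] by blast
  qed
  obtain x0 y0 where xy0: "x0\<in>D1" "y0\<in>D1" "x0\<noteq>y0" using two[OF D1] by blast
  obtain B0 where B0: "B0\<in>Bs" "x0\<in>B0" "y0\<in>B0" using exB[of x0 y0] xy0 DsubP[OF D1] by blast
  have cB0: "card (B0 \<inter> D1) = k0" using k0 B0 D1 xy0 by blast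
  have k0ge2: "k0 \<ge> 2"
  proof -
    have "card {x0,y0} \<le> card (B0 \<inter> D1)"
      using B0 xy0 finD[OF D1] by (intro card_mono) auto
    then show ?thesis using cB0 xy0 by simp
  qed
  have k0le: "k0 \<le> v0"
  proof -
    have "card (B0 \<inter> D1) \<le> card D1" by (rule card_mono) (use finD[OF D1] in auto)
    then show ?thesis using cB0 cardD[OF D1] by simp
  qed
  have kge: "k0 \<le> k"
  proof -
    have "card (B0 \<inter> D1) \<le> card B0" by (rule card_mono) (use finB[OF B0(1)] in auto)
    then show ?thesis using cB0 blk[OF B0(1)] by simp
  qed
  have rcount: "\<And>x. x\<in>P \<Longrightarrow> card {B\<in>Bs. x\<in>B} * (k-1) = lam*(v-1)"
  proof -
    fix x assume x: "x\<in>P"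
    define R where "R = {B\<in>Bs. x\<in>B}"
    have finR: "finite R" using finBs R_def by simp
    have "(\<Sum>B\<in>R. card {y\<in>P-{x}. y\<in>B}) = (\<Sum>y\<in>P-{x}. card {B\<in>R. y\<in>B})"
      using dc finR finP by blast
    moreover have "(\<Sum>B\<in>R. card {y\<in>P-{x}. y\<in>B}) = (\<Sum>B\<in>R. k-1)"
    proof (rule sum.cong)
      fix B assume "B\<in>R"
      then have "{y\<in>P-{x}. y\<in>B} = B - {x}" "x\<in>B" "card B = k" "finite B"
        using R_def blk finB by auto
      then show "card {y\<in>P-{x}. y\<in>B} = k-1" by simp
    qed simp
    moreover have "(\<Sum>y\<in>P-{x}. card {B\<in>R. y\<in>B}) = (\<Sum>y\<in>P-{x}. lam)"
    proof (rule sum.cong)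
      fix y assume "y\<in>P-{x}"
      then have "{B\<in>R. y\<in>B} = {B\<in>Bs. x\<in>B \<and> y\<in>B}" "card {B\<in>Bs. x\<in>B \<and> y\<in>B} = lam"
        using R_def pair x by auto
      then show "card {B\<in>R. y\<in>B} = lam" by simp
    qed simp
    ultimately show "card {B\<in>Bs. x\<in>B} * (k-1) = lam*(v-1)"
      using R_def x finP cardP by (simp add: card_Diff_singleton mult.commute)
  qed
  have r0count: "\<And>x D. D\<in>\<Sigma> \<Longrightarrow> x\<in>D \<Longrightarrow> card {B\<in>Bs. x\<in>B} * (k0-1) = lam*(v0-1)"
  proof -
    fix x D assume D: "D\<in>\<Sigma>" and x: "x\<in>D"
    define R where "R = {B\<in>Bs. x\<in>B}"
    have finR: "finite R" using finBs R_def by simp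
    have "(\<Sum>B\<in>R. card {y\<in>D-{x}. y\<in>B}) = (\<Sum>y\<in>D-{x}. card {B\<in>R. y\<in>B})"
      using dc finR finD[OF D] by blast
    moreover have "(\<Sum>B\<in>R. card {y\<in>D-{x}. y\<in>B}) = (\<Sum>B\<in>R. k0-1)"
    proof (rule sum.cong)
      fix B assume B: "B\<in>R"
      then have "{y\<in>D-{x}. y\<in>B} = (B \<inter> D) - {x}" "x\<in>B \<inter> D" "finite (B\<inter>D)"
        using R_def finB x by auto
      moreover have "card (B\<inter>D) = k0" using k0 B R_def D x by blast
      ultimately show "card {y\<in>D-{x}. y\<in>B} = k0-1" by simp
    qed simp
    moreover have "(\<Sum>y\<in>D-{x}. card {B\<in>R. y\<in>B}) = (\<Sum>y\<in>D-{x}. lam)"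
    proof (rule sum.cong)
      fix y assume "y\<in>D-{x}"
      then have "{B\<in>R. y\<in>B} = {B\<in>Bs. x\<in>B \<and> y\<in>B}" "card {B\<in>Bs. x\<in>B \<and> y\<in>B} = lam"
        using R_def pair x DsubP[OF D] by auto
      then show "card {B\<in>R. y\<in>B} = lam" by simp
    qed simp
    ultimately show "card {B\<in>Bs. x\<in>B} * (k0-1) = lam*(v0-1)"
      using R_def x finD[OF D] cardD[OF D] by (simp add: card_Diff_singleton mult.commute)
  qed
  have key: "(v-1)*(k0-1) = (v0-1)*(k-1)"
  proof -
    define r where "r = card {B\<in>Bs. x0\<in>B}"
    have x0P: "x0\<in>P" using xy0 DsubP[OF D1] by blast
    have "lam*((v-1)*(k0-1)) = r*(k-1)*(k0-1)" using rcount[OF x0P] r_def by simp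
    also have "\<dots> = r*(k0-1)*(k-1)" by simp
    also have "\<dots> = lam*((v0-1)*(k-1))" using r0count[OF D1 xy0(1)] r_def by simp
    finally show ?thesis using lampos by simp
  qed
  have k0lt: "k0 < v0"
  proof (rule ccontr)
    assume "\<not> k0 < v0"
    then have "k0 = v0" using k0le by simp
    then have "(v-1)*(v0-1) = (v0-1)*(k-1)" using key by simp
    then have "v-1 = k-1" using v0g by simp
    then show False using kv kge k0ge2 by simp
  qed
  have dvdk: "k0 dvd k"
  proof -
    have "B0 = (\<Union>D\<in>\<Sigma>. B0 \<inter> D)" using UP blk[OF B0(1)] by blast
    then have "card B0 = (\<Sum>D\<in>\<Sigma>. card (B0 \<inter> D))"
      using card_UN_disjoint[OF finS, of "\<lambda>D. B0 \<inter> D"] finB[OF B0(1)] disj by auto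
    moreover have "k0 dvd (\<Sum>D\<in>\<Sigma>. card (B0 \<inter> D))"
      by (rule dvd_sum) (metis card.empty dvd_0_right dvd_refl k0 B0(1))
    ultimately show ?thesis using blk[OF B0(1)] by simp
  qed
  have blkP: "\<And>B. B\<in>Bs \<Longrightarrow> B \<subseteq> P" using blk by blast
  have stab: "\<And>g D x. g\<in>G \<Longrightarrow> D\<in>\<Sigma> \<Longrightarrow> x\<in>D \<Longrightarrow> g x \<in> D \<Longrightarrow> g`D = D"
  proof -
    fix g D x assume g: "g\<in>G" and D: "D\<in>\<Sigma>" and x: "x\<in>D" and gx: "g x \<in> D"
    show "g`D = D" using uniq[OF Ginv[OF g D] D imageI[OF x] gx] .
  qed
  have imgint: "\<And>g A C. g\<in>G \<Longrightarrow> A\<subseteq>P \<Longrightarrow> C\<subseteq>P \<Longrightarrow> g`(A\<inter>C) = g`A \<inter> g`C"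
  proof -
    fix g A C assume g: "g\<in>G" and A: "A\<subseteq>P" and C: "C\<subseteq>P"
    show "g`(A\<inter>C) = g`A \<inter> g`C" by (rule inj_on_image_Int[OF conjunct1[OF Gi[OF g]] A C])
  qed
  have fib: "\<And>D. D\<in>\<Sigma> \<Longrightarrow> \<exists>m>0. \<forall>T. T\<noteq>{} \<longrightarrow> T\<subseteq>D \<longrightarrow>
      card {B\<in>Bs. T\<subseteq>B} = m * card {S\<in>induced_blocks Bs D. T\<subseteq>S}"
  proof -
    fix D assume D: "D\<in>\<Sigma>"
    define IB where "IB = induced_blocks Bs D"
    define fb where "fb S = {B\<in>Bs. B\<inter>D = S}" for S
    have finfb: "\<And>S. finite (fb S)" using finBs fb_def by simp
    have tr: "card (fb S) \<le> card (fb S')" if S: "S\<in>IB" and S': "S'\<in>IB" for S S'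
    proof -
      obtain B where B: "B\<in>Bs" "S = B\<inter>D" "B\<inter>D \<noteq> {}" using S unfolding IB_def induced_blocks_def by blast
      obtain B' where B': "B'\<in>Bs" "S' = B'\<inter>D" "B'\<inter>D \<noteq> {}" using S' unfolding IB_def induced_blocks_def by blast
      obtain x where x: "x\<in>B" "x\<in>D" using B by blast
      obtain y where y: "y\<in>B'" "y\<in>D" using B' by blast
      obtain g where g: "g\<in>G" "g x = y" "g`B = B'" using ft B(1) B'(1) x(1) y(1) unfolding flag_transitive_def by blast
      have gD: "g`D = D" using stab[OF g(1) D x(2)] g(2) y(2) by simp
      have gS: "g`S = S'" using imgint[OF g(1) blkP[OF B(1)] DsubP[OF D]] gD g(3) B(2) B'(2) by simp
      have "fb S \<subseteq> Pow P" using blkP fb_def by auto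
      then have "inj_on (image g) (fb S)"
        by (rule inj_on_subset[OF inj_on_image_Pow[OF conjunct1[OF Gi[OF g(1)]]]])
      moreover have "image g ` fb S \<subseteq> fb S'"
      proof
        fix C' assume "C' \<in> image g ` fb S"
        then obtain C where C: "C\<in>Bs" "C\<inter>D = S" "C' = g`C" unfolding fb_def by blast
        have "g`C \<inter> D = g`C \<inter> g`D" using gD by simp
        also have "\<dots> = g`(C\<inter>D)" by (rule imgint[OF g(1) blkP[OF C(1)] DsubP[OF D], symmetric])
        finally have "g`C \<inter> D = S'" using C gS by simp
        then show "C' \<in> fb S'" using C Gb[OF g(1) C(1)] fb_def by simp
      qed
      ultimately show ?thesis by (rule card_inj_on_le[OF _ _ finfb])
    qed
    obtain x where x: "x\<in>D" using two[OF D] by blast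
    obtain B1 where B1: "B1\<in>Bs" "x\<in>B1" using blkx x DsubP[OF D] by blast
    define S0 where "S0 = B1 \<inter> D"
    have S0: "S0\<in>IB" unfolding S0_def IB_def induced_blocks_def using B1 x by blast
    define m where "m = card (fb S0)"
    have mall: "\<And>S. S\<in>IB \<Longrightarrow> card (fb S) = m" proof -
      fix S assume "S\<in>IB"
      show "card (fb S) = m" unfolding m_def by (rule antisym) (rule tr, fact, fact S0, rule tr, fact S0, fact)
    qed
    have "B1 \<in> fb S0" by (simp add: fb_def S0_def B1(1))
    then have mpos: "m > 0" unfolding m_def using finfb[of S0] card_gt_0_iff by blast
    have finIB: "finite IB"
    proof -
      have "IB \<subseteq> (\<lambda>B. B\<inter>D) ` Bs" unfolding IB_def induced_blocks_def by blast
      then show ?thesis using finBs by (rule finite_surj[rotated])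
    qed
    have "\<forall>T. T\<noteq>{} \<longrightarrow> T\<subseteq>D \<longrightarrow> card {B\<in>Bs. T\<subseteq>B} = m * card {S\<in>IB. T\<subseteq>S}"
    proof (intro allI impI)
      fix T assume T: "T\<noteq>{}" "T\<subseteq>D"
      have eq: "{B\<in>Bs. T\<subseteq>B} = (\<Union>S\<in>{S\<in>IB. T\<subseteq>S}. fb S)"
      proof
        show "{B\<in>Bs. T\<subseteq>B} \<subseteq> (\<Union>S\<in>{S\<in>IB. T\<subseteq>S}. fb S)"
        proof
          fix B assume B: "B\<in>{B\<in>Bs. T\<subseteq>B}"
          then have "B\<inter>D \<in> IB" using T unfolding IB_def induced_blocks_def by blast
          moreover have "T \<subseteq> B\<inter>D" using B T by auto
          ultimately show "B \<in> (\<Union>S\<in>{S\<in>IB. T\<subseteq>S}. fb S)" using B fb_def by auto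
        qed
        show "(\<Union>S\<in>{S\<in>IB. T\<subseteq>S}. fb S) \<subseteq> {B\<in>Bs. T\<subseteq>B}" using fb_def by auto
      qed
      have "card (\<Union>S\<in>{S\<in>IB. T\<subseteq>S}. fb S) = (\<Sum>S\<in>{S\<in>IB. T\<subseteq>S}. card (fb S))"
        by (rule card_UN_disjoint) (use finIB finfb fb_def in auto)
      also have "\<dots> = (\<Sum>S\<in>{S\<in>IB. T\<subseteq>S}. m)" using mall by simp
      finally show "card {B\<in>Bs. T\<subseteq>B} = m * card {S\<in>IB. T\<subseteq>S}" using eq by simp
    qed
    then show "\<exists>m>0. \<forall>T. T\<noteq>{} \<longrightarrow> T\<subseteq>D \<longrightarrow>
      card {B\<in>Bs. T\<subseteq>B} = m * card {S\<in>induced_blocks Bs D. T\<subseteq>S}" using mpos IB_def by blast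
  qed
  have IBblk: "\<And>D S. D\<in>\<Sigma> \<Longrightarrow> S \<in> induced_blocks Bs D \<Longrightarrow> S \<subseteq> D \<and> card S = k0"
    using k0 unfolding induced_blocks_def by auto
  have des2: "\<And>D. D\<in>\<Sigma> \<Longrightarrow> \<exists>lam0. design2 D (induced_blocks Bs D) v0 k0 lam0"
  proof -
    fix D assume D: "D\<in>\<Sigma>"
    obtain m where m: "m>0" "\<And>T. T\<noteq>{} \<Longrightarrow> T\<subseteq>D \<Longrightarrow>
      card {B\<in>Bs. T\<subseteq>B} = m * card {S\<in>induced_blocks Bs D. T\<subseteq>S}" using fib[OF D] by blast
    have pc: "card {S\<in>induced_blocks Bs D. x\<in>S \<and> y\<in>S} = lam div m"
      if "x\<in>D" "y\<in>D" "x\<noteq>y" for x y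
    proof -
      have "lam = card {B\<in>Bs. {x,y}\<subseteq>B}" using pair that DsubP[OF D] by auto
      also have "\<dots> = m * card {S\<in>induced_blocks Bs D. {x,y}\<subseteq>S}" using m(2)[of "{x,y}"] that by simp
      finally show ?thesis using m by simp
    qed
    have "lam div m > 0"
    proof -
      obtain x y where "x\<in>D" "y\<in>D" "x\<noteq>y" using two[OF D] by blast
      have "lam = card {B\<in>Bs. {x,y}\<subseteq>B}" using pair \<open>x\<in>D\<close> \<open>y\<in>D\<close> \<open>x\<noteq>y\<close> DsubP[OF D] by auto
      also have "\<dots> = m * card {S\<in>induced_blocks Bs D. {x,y}\<subseteq>S}" using m(2)[of "{x,y}"] \<open>x\<in>D\<close> \<open>y\<in>D\<close> by simp
      finally have e: "lam = m * card {S\<in>induced_blocks Bs D. {x,y}\<subseteq>S}" .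
      show ?thesis using e m(1) lampos by simp
    qed
    then show "\<exists>lam0. design2 D (induced_blocks Bs D) v0 k0 lam0"
      unfolding design2_def using finD[OF D] cardD[OF D] IBblk[OF D] pc by blast
  qed
  have des1: "\<And>D. D\<in>\<Sigma> \<Longrightarrow> \<exists>r0. design1 D (induced_blocks Bs D) v0 k0 r0"
  proof -
    fix D assume D: "D\<in>\<Sigma>"
    obtain m where m: "m>0" "\<And>T. T\<noteq>{} \<Longrightarrow> T\<subseteq>D \<Longrightarrow>
      card {B\<in>Bs. T\<subseteq>B} = m * card {S\<in>induced_blocks Bs D. T\<subseteq>S}" using fib[OF D] by blast
    define r where "r = lam*(v-1) div (k-1)"
    have rx: "card {B\<in>Bs. x\<in>B} = r" if "x\<in>P" for x
      proof -
      have "k - 1 \<noteq> 0" using k0ge2 kge by simp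
      then show ?thesis unfolding r_def rcount[OF that, symmetric] by simp
    qed
    have pc: "card {S\<in>induced_blocks Bs D. x\<in>S} = r div m" if "x\<in>D" for x
    proof -
      have "r = card {B\<in>Bs. {x}\<subseteq>B}" using rx that DsubP[OF D] by auto
      also have "\<dots> = m * card {S\<in>induced_blocks Bs D. {x}\<subseteq>S}" using m(2)[of "{x}"] that by simp
      finally show ?thesis using m by simp
    qed
    have "r div m > 0"
    proof -
      obtain x where x: "x\<in>D" using two[OF D] by blast
      then have xP: "x\<in>P" using DsubP[OF D] by blast
      have "v - 1 \<noteq> 0" using vbig v0g by simp
      have rp: "r > 0"
      proof (rule ccontr)
        assume "\<not> r > 0"
        then have "r = 0" by simp
        then have "lam*(v-1) = 0" using rcount[OF xP] rx[OF xP] by simp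
        then show False using lampos \<open>v - 1 \<noteq> 0\<close> by simp
      qed
      have "r = card {B\<in>Bs. {x}\<subseteq>B}" using rx xP by auto
      also have "\<dots> = m * card {S\<in>induced_blocks Bs D. {x}\<subseteq>S}" using m(2)[of "{x}"] x by simp
      finally have e: "r = m * card {S\<in>induced_blocks Bs D. {x}\<subseteq>S}" .
      show ?thesis using e m(1) rp by simp
    qed
    then show "\<exists>r0. design1 D (induced_blocks Bs D) v0 k0 r0"
      unfolding design1_def using finD[OF D] cardD[OF D] IBblk[OF D] pc by blast
  qed
  have trans2: "k0 = 2 \<Longrightarrow> \<forall>D\<in>\<Sigma>. induced_2transitive G D"
  proof -
    assume k2: "k0 = 2"
    have bl: "\<exists>B\<in>Bs. B \<inter> D = {x,y}" if D: "D\<in>\<Sigma>" and xy: "x\<in>D" "y\<in>D" "x\<noteq>y" for D x y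
    proof -
      have xP: "x\<in>P" and yP: "y\<in>P" using xy DsubP[OF D] by auto
      obtain B where B: "B\<in>Bs" "x\<in>B" "y\<in>B" using exB[OF xP yP xy(3)] by blast
      have ne: "B\<inter>D \<noteq> {}" using B(2) xy(1) by blast
      have c2: "card (B\<inter>D) = 2" using k0[rule_format, OF B(1) D ne] k2 by simp
      have sub: "{x,y} \<subseteq> B\<inter>D" using B xy by simp
      have cxy: "card {x,y} = 2" using xy(3) by simp
      have fin: "finite (B\<inter>D)" using finB[OF B(1)] by simp
      have "{x,y} = B\<inter>D" using card_subset_eq[OF fin sub] c2 cxy by simp
      then show ?thesis using B(1) by (intro bexI[of _ B]) simp_all
    qed
    show ?thesis unfolding induced_2transitive_def
    proof (intro ballI impI)
      fix D x y x' y' assume D: "D\<in>\<Sigma>" and p: "x\<in>D" "y\<in>D" "x'\<in>D" "y'\<in>D" "x\<noteq>y" "x'\<noteq>y'"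
      obtain B where B: "B\<in>Bs" "B\<inter>D = {x,y}" using bl[OF D p(1) p(2) p(5)] by blast
      obtain C where C: "C\<in>Bs" "C\<inter>D = {x',y'}" using bl[OF D p(3) p(4) p(6)] by blast
      have xB: "x\<in>B" using B(2) by blast
      have xC: "x'\<in>C" using C(2) by blast
      obtain g where g: "g\<in>G" "g x = x'" "g`B = C" using ft B(1) C(1) xB xC unfolding flag_transitive_def by blast
      have gD: "g`D = D" using stab[OF g(1) D p(1)] g(2) p(3) by simp
      have "g`(B\<inter>D) = C\<inter>D" using imgint[OF g(1) blkP[OF B(1)] DsubP[OF D]] gD g by simp
      then have "{g x, g y} = {x', y'}" using B C by simp
      moreover have "g y \<noteq> g x"
      proof
        assume "g y = g x"
        then have "y = x" by (rule inj_onD[OF conjunct1[OF Gi[OF g(1)]]]) (use p DsubP[OF D] in auto)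
        with p show False by simp
      qed
      ultimately have "g y = y'" using g(2) by (metis doubleton_eq_iff)
      then show "\<exists>g\<in>G. g ` D = D \<and> g x = x' \<and> g y = y'" using g gD by blast
    qed
  qed
  show ?thesis
  proof (cases "k0 = 2")
    case True
    obtain q where q: "k = 2*q" using dvdk True by blast
    have q1: "q \<ge> 1" using q kge k0ge2 by simp
    have "v - 1 = (v0-1)*(k-1)" using key True by simp
    then have "v = (v0-1)*(2*q-1) + 1" using q kv by simp
    then have "int v = (int v0 - 1) * (2 * int q - 1) + 1" using v0g q1 by (simp add: of_nat_diff)
    moreover have "k div k0 = q" using q True by simp
    ultimately show ?thesis using True trans2 k0lt by simp
  next
    case False
    then have k3: "k0 \<ge> 3" using k0ge2 by simp
    show ?thesis
    proof (cases "k0 \<le> v0 - 2")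
      case True
      then show ?thesis using k3 des2 k0lt by simp
    next
      case False
      then have kv0: "k0 = v0 - 1" using k0lt by simp
      define a where "a = v0 - 1"
      have a3: "a \<ge> 3" using kv0 k3 a_def by simp
      have h: "(v-1)*(a-1) = a*(k-1)" using key kv0 a_def by simp
      have hi: "(int v - 1)*(int a - 1) = int a * (int k - 1)"
        proof -
        have "int ((v-1)*(a-1)) = int (a*(k-1))" using h by simp
        moreover have "v \<ge> 1" "a \<ge> 1" "k \<ge> 1" using kv a3 kge k0ge2 by simp_all
        ultimately show ?thesis by (simp add: of_nat_diff)
      qed
      have e1: "int v - 1 = int a * (int v - int k)" using hi by algebra
      have e2: "int k - 1 = (int v - int k) * (int a - 1)"
      proof -
        have "int a * (int k - 1) = int a * ((int v - int k) * (int a - 1))" using hi e1 by algebra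
        then show ?thesis using a3 by simp
      qed
      define t where "t = v - k"
      have ti: "int t = int v - int k" using t_def kv by simp
      have t2: "t \<ge> 2"
      proof (rule ccontr)
        assume "\<not> t \<ge> 2"
        moreover have "t \<ge> 1" using t_def kv by simp
        ultimately have "t = 1" by simp
        then have "int v - 1 = int a" using e1 ti by simp
        then show False using vbig a_def v0g by simp
      qed
      have ia: "int a = int v0 - 1" using a_def v0g by simp
      have e3: "int k - 1 = int t * (int v0 - 1 - 1)" using e2[unfolded ti[symmetric] ia] .
      have "int k = int t * (int v0 - 2) + 1" using e3 by (simp add: algebra_simps)
      moreover have "int (t * (v0 - 2) + 1) = int t * (int v0 - 2) + 1" using a3 a_def by (simp add: of_nat_diff)
      ultimately have kt: "k = t * (v0 - 2) + 1" by (metis of_nat_eq_iff)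
      have e4: "int v - 1 = int a * int t" using e1[unfolded ti[symmetric]] .
      have "int v = int t * (int v0 - 1) + 1" using e4 unfolding ia by (simp add: algebra_simps)
      moreover have "int (t * (v0 - 1) + 1) = int t * (int v0 - 1) + 1" using v0g by (simp add: of_nat_diff)
      ultimately have vt: "v = t * (v0 - 1) + 1" by (metis of_nat_eq_iff)
      show ?thesis using kv0 k3 des1 t2 kt vt k0lt by auto
    qed
  qed
qed
end
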